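(* Let $(X,\tau)$ be a nonempty regular topological space without isolated points whose underlying set $X$ is countable. There is a coloring $c:[X]^2\to2$ such that every infinite $c$-homogeneous subset of $X$ is nowhere dense in $(X,\tau)$. Consequently the ideal $nwd(X,\tau)$ of nowhere dense subsets of $(X,\tau)$ (viewed as a family of subsets of $\mathbb{N}$ via a fixed bijection $X\cong\mathbb{N}$) has a Borel selector.
   Context: A set $h$ is $c$-homogeneous if $c$ is constant on $[h]^2$. A Borel selector for a tall family $\mathcal{C}\subseteq2^{\mathbb{N}}$ is a Borel $S:2^{\mathbb{N}}\to2^{\mathbb{N}}$ with $S(x)\subseteq x$, $S(x)\in\mathcal{C}$, and $S(x)$ infinite whenever $x$ is infinite. *)

theory Defs
  imports "HOL-Analysis.Analysis"
begin

definition nowhere_dense_in :: "'a topology \<Rightarrow> 'a set \<Rightarrow> bool" where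
  "nowhere_dense_in T A \<longleftrightarrow> A \<subseteq> topspace T \<and> T interior_of (T closure_of A) = {}"

definition homogeneous :: "('a set \<Rightarrow> bool) \<Rightarrow> 'a set \<Rightarrow> bool" where
  "homogeneous c h \<longleftrightarrow> (\<exists>b. \<forall>x\<in>h. \<forall>y\<in>h. x \<noteq> y \<longrightarrow> c {x, y} = b)"

text \<open>Cantor space 2^N is nat \<Rightarrow> bool with the product topology; points are
  identified with subsets of nat via Collect. A Borel selector for a family C of subsets
  of nat.\<close>
definition borel_selector :: "nat set set \<Rightarrow> ((nat \<Rightarrow> bool) \<Rightarrow> (nat \<Rightarrow> bool)) \<Rightarrow> bool" where
  "borel_selector C S \<longleftrightarrow>
     S \<in> borel_measurable borel \<and>
     (\<forall>x. Collect (S x) \<subseteq> Collect x) \<and>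
     (\<forall>x. Collect (S x) \<in> C) \<and>
     (\<forall>x. infinite (Collect x) \<longrightarrow> infinite (Collect (S x)))"

end

theory Submission
  imports Defs
begin


lemma t1_closed_finite:
  assumes "t1_space T" "finite S" "S \<subseteq> topspace T" shows "closedin T S"
  using assms(1) assms(2,3) unfolding t1_space_closedin_finite by blast

lemma no_finite_open:
  assumes "t1_space T" "\<forall>x\<in>topspace T. \<not> openin T {x}" "openin T W" "finite W" "W \<noteq> {}"
  shows False
proof -
  obtain w where w: "w \<in> W" using assms(5) by blast
  have sub: "W \<subseteq> topspace T" by (rule openin_subset[OF assms(3)])
  have "W - {w} \<subseteq> topspace T" using sub by blast
  then have "closedin T (W - {w})" using t1_closed_finite[OF assms(1)] assms(4) by simp
  then have "openin T (W - (W - {w}))" by (rule openin_diff[OF assms(3)])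
  moreover have "W - (W - {w}) = {w}" using w by blast
  ultimately have "openin T {w}" by simp
  moreover have "w \<in> topspace T" using w sub by blast
  ultimately show False using assms(2) by blast
qed

lemma dense_open_infinite:
  assumes "t1_space T" "\<forall>x\<in>topspace T. \<not> openin T {x}" "openin T W" "W \<noteq> {}"
    "W \<subseteq> T closure_of h"
  shows "infinite (W \<inter> h)"
proof
  assume fin: "finite (W \<inter> h)"
  have sub: "W \<subseteq> topspace T" by (rule openin_subset[OF assms(3)])
  have "W \<inter> h \<subseteq> topspace T" using sub by blast
  then have "closedin T (W \<inter> h)" by (rule t1_closed_finite[OF assms(1) fin])
  then have op: "openin T (W - (W \<inter> h))" by (rule openin_diff[OF assms(3)])
  have "(W - (W \<inter> h)) \<inter> h = {}" by blast
  then have "(W - (W \<inter> h)) \<inter> T closure_of h = {}"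
    using openin_Int_closure_of_eq_empty[OF op] by simp
  then have "W - (W \<inter> h) = {}" using assms(5) by blast
  then have "W \<subseteq> W \<inter> h" by blast
  then have "finite W" using fin by (rule finite_subset)
  then show False by (rule no_finite_open[OF assms(1,2,3) _ assms(4)])
qed

lemma finite_nwd:
  assumes "t1_space T" "\<forall>x\<in>topspace T. \<not> openin T {x}" "h \<subseteq> topspace T" "finite h"
  shows "nowhere_dense_in T h"
proof -
  let ?V = "T interior_of (T closure_of h)"
  have "?V = {}"
  proof (rule ccontr)
    assume ne: "?V \<noteq> {}"
    have "infinite (?V \<inter> h)"
      by (rule dense_open_infinite[OF assms(1,2) openin_interior_of ne interior_of_subset])
    then show False using assms(4) by simp
  qed
  then show ?thesis using assms(3) unfolding nowhere_dense_in_def by simp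
qed

lemma part1:
  fixes T :: "'a topology"
  assumes cnt: "countable (topspace T)"
    and t1: "t1_space T" and reg: "regular_space T"
    and nis: "\<forall>x\<in>topspace T. \<not> openin T {x}"
  shows "\<exists>c :: 'a set \<Rightarrow> bool. \<forall>h. h \<subseteq> topspace T \<and> infinite h \<and> homogeneous c h
            \<longrightarrow> nowhere_dense_in T h"
proof -
  define X where "X = topspace T"
  define idx where "idx = to_nat_on X"
  have inj: "inj_on idx X" unfolding idx_def using cnt X_def by (simp add: inj_on_to_nat_on)
  have finle: "finite {z\<in>X. idx z \<le> n}" for n
  proof -
    have i: "inj_on idx {z\<in>X. idx z \<le> n}" using inj by (rule inj_on_subset) blast
    have "idx ` {z\<in>X. idx z \<le> n} \<subseteq> {..n}" by auto
    then have "finite (idx ` {z\<in>X. idx z \<le> n})" by (rule finite_subset[OF _ finite_atMost])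
    then show ?thesis by (rule finite_imageD[OF _ i])
  qed
  have exU: "\<exists>U. openin T U \<and> x \<in> U \<and> disjnt {z\<in>X. idx z < idx x} (T closure_of U)"
    if "x \<in> X" for x
  proof -
    have "finite {z\<in>X. idx z < idx x}"
      by (rule finite_subset[OF _ finle[of "idx x"]]) auto
    moreover have "{z\<in>X. idx z < idx x} \<subseteq> topspace T" unfolding X_def by blast
    ultimately have cl: "closedin T {z\<in>X. idx z < idx x}"
      by (rule t1_closed_finite[OF t1])
    have mem: "x \<in> topspace T - {z\<in>X. idx z < idx x}" using that unfolding X_def by simp
    show ?thesis using reg[unfolded regular_space, rule_format, OF conjI[OF cl mem]] .
  qed
  define U where "U x = (SOME U. openin T U \<and> x \<in> U \<and> disjnt {z\<in>X. idx z < idx x} (T closure_of U))" for x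
  have U: "openin T (U x)" "x \<in> U x" "disjnt {z\<in>X. idx z < idx x} (T closure_of (U x))"
    if "x \<in> X" for x
    using someI_ex[OF exU[OF that]] unfolding U_def by blast+
  define c where "c s = (\<exists>x y. x\<in>X \<and> y\<in>X \<and> s = {x,y} \<and> idx x < idx y \<and> y \<in> U x)" for s
  have cval: "c {x,y} \<longleftrightarrow> y \<in> U x" if "x \<in> X" "y \<in> X" "idx x < idx y" for x y
  proof
    assume "c {x,y}"
    then obtain x' y' where "x'\<in>X" "y'\<in>X" "{x,y} = {x',y'}" "idx x' < idx y'" "y' \<in> U x'"
      unfolding c_def by blast
    then show "y \<in> U x" using that by (metis doubleton_eq_iff less_asym)
  next
    assume "y \<in> U x" then show "c {x,y}" unfolding c_def using that by blast
  qed
  show ?thesis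
  proof (intro exI[of _ c] allI impI)
    fix h assume H: "h \<subseteq> topspace T \<and> infinite h \<and> homogeneous c h"
    then have hX: "h \<subseteq> X" unfolding X_def by blast
    obtain b where hom0: "\<forall>x\<in>h. \<forall>y\<in>h. x \<noteq> y \<longrightarrow> c {x,y} = b"
      using H unfolding homogeneous_def by (elim conjE exE) (rule that)
    have hom: "c {x,y} = b" if "x\<in>h" "y\<in>h" "x \<noteq> y" for x y using hom0 that by blast
    let ?V = "T interior_of (T closure_of h)"
    have "?V = {}"
    proof (rule ccontr)
      assume ne: "?V \<noteq> {}"
      have Vo: "openin T ?V" by simp
      have Vs: "?V \<subseteq> T closure_of h" by (rule interior_of_subset)
      have key: "False" if "openin T W" "W \<noteq> {}" "W \<subseteq> ?V" "finite (W \<inter> h)" for W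
      proof -
        have "W \<subseteq> T closure_of h" using that(3) Vs by (rule subset_trans)
        then have "infinite (W \<inter> h)" using dense_open_infinite[OF t1 nis that(1,2)] by simp
        then show False using that(4) by simp
      qed
      have inf: "infinite (?V \<inter> h)" using dense_open_infinite[OF t1 nis Vo ne Vs] .
      show False
      proof (cases b)
        case False
        obtain p where p: "p \<in> ?V \<inter> h" using inf by (metis finite.emptyI ex_in_conv)
        have pX: "p \<in> X" using p hX by blast
        let ?W = "?V \<inter> U p"
        have "?W \<inter> h \<subseteq> {z\<in>X. idx z \<le> idx p}"
        proof
          fix y assume y: "y \<in> ?W \<inter> h"
          have yX: "y \<in> X" using y hX by blast
          show "y \<in> {z\<in>X. idx z \<le> idx p}"
          proof (rule ccontr)
            assume "y \<notin> {z\<in>X. idx z \<le> idx p}"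
            then have lt: "idx p < idx y" using yX by auto
            then have "y \<noteq> p" by auto
            then have "c {p,y} = b" using hom p y by blast
            moreover have "c {p,y}" using cval[OF pX yX lt] y by blast
            ultimately show False using False by simp
          qed
        qed
        then have fin: "finite (?W \<inter> h)" by (rule finite_subset[OF _ finle])
        have op: "openin T ?W" by (rule openin_Int[OF Vo U(1)[OF pX]])
        have ne: "?W \<noteq> {}" using p U(2)[OF pX] by blast
        have sub: "?W \<subseteq> ?V" by blast
        show False by (rule key[OF op ne sub fin])
      next
        case True
        obtain p q where pq: "p \<in> ?V \<inter> h" "q \<in> ?V \<inter> h" "p \<noteq> q"
        proof -
          obtain p where p: "p \<in> ?V \<inter> h" using inf by (metis finite.emptyI ex_in_conv)
          have "infinite (?V \<inter> h - {p})" using inf by simp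
          then obtain q where q: "q \<in> ?V \<inter> h - {p}" by (metis finite.emptyI ex_in_conv)
          show ?thesis using that p q by blast
        qed
        have p0X: "p \<in> X" and q0X: "q \<in> X" using pq hX by blast+
        have neq: "idx p \<noteq> idx q"
        proof
          assume "idx p = idx q"
          then have "p = q" by (rule inj_onD[OF inj _ p0X q0X])
          then show False using pq(3) by simp
        qed
        obtain p q where pq: "p \<in> ?V \<inter> h" "q \<in> ?V \<inter> h" "idx p < idx q"
        proof (cases "idx p < idx q")
          case True then show ?thesis using that pq(1,2) by blast
        next
          case False then have "idx q < idx p" using neq by simp
          then show ?thesis using that pq(1,2) by blast
        qed
        have pX: "p \<in> X" and qX: "q \<in> X" using pq hX by blast+
        let ?W = "?V - T closure_of (U q)"
        have "?W \<inter> h \<subseteq> {z\<in>X. idx z \<le> idx q}"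
        proof
          fix y assume y: "y \<in> ?W \<inter> h"
          have yX: "y \<in> X" using y hX by blast
          show "y \<in> {z\<in>X. idx z \<le> idx q}"
          proof (rule ccontr)
            assume "y \<notin> {z\<in>X. idx z \<le> idx q}"
            then have lt: "idx q < idx y" using yX by auto
            then have "y \<noteq> q" by auto
            then have "c {q,y} = b" using hom pq y by blast
            then have "y \<in> U q" using cval[OF qX yX lt] True by simp
            then have "y \<in> T closure_of (U q)"
              using closure_of_subset[OF openin_subset[OF U(1)[OF qX]]] by blast
            then show False using y by blast
          qed
        qed
        then have fin: "finite (?W \<inter> h)" by (rule finite_subset[OF _ finle])
        have op: "openin T ?W" by (rule openin_diff[OF Vo closedin_closure_of])
        have "p \<notin> T closure_of (U q)" using U(3)[OF qX] pX pq(3) unfolding disjnt_def by blast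
        then have "p \<in> ?W" using pq(1) by blast
        then have ne: "?W \<noteq> {}" by blast
        have sub: "?W \<subseteq> ?V" by blast
        show False by (rule key[OF op ne sub fin])
      qed
    qed
    then show "nowhere_dense_in T h" using H unfolding nowhere_dense_in_def by simp
  qed
qed


instance bool :: second_countable_topology
proof
  show "\<exists>B::bool set set. countable B \<and> open = generate_topology B"
    by (intro exI[of _ UNIV]) (auto simp: fun_eq_iff open_discrete intro: generate_topology.Basis)
qed

lemma pred_coord[measurable]: "Measurable.pred borel (\<lambda>x::nat\<Rightarrow>bool. x i)"
proof -
  have "(\<lambda>x::nat\<Rightarrow>bool. x i) \<in> measurable borel borel" by (rule measurable_product_coordinates)
  then show ?thesis using measurable_cong_sets[OF refl sets_borel_eq_count_space] by blast
qed

definition Aset :: "(nat\<Rightarrow>nat\<Rightarrow>bool) \<Rightarrow> (nat\<Rightarrow>bool) \<Rightarrow> (nat\<times>bool) list \<Rightarrow> nat \<Rightarrow> bool" where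
  "Aset col x L n \<longleftrightarrow> x n \<and> (\<forall>p\<in>set L. fst p < n \<and> col (fst p) n = snd p)"

primrec Fseq :: "(nat\<Rightarrow>nat\<Rightarrow>bool) \<Rightarrow> (nat\<Rightarrow>bool) \<Rightarrow> nat \<Rightarrow> (nat\<times>bool) list" where
  "Fseq col x 0 = []"
| "Fseq col x (Suc k) = Fseq col x k @ [((LEAST n. Aset col x (Fseq col x k) n),
      infinite {n. Aset col x (Fseq col x k) n \<and> (LEAST n. Aset col x (Fseq col x k) n) < n
          \<and> col (LEAST n. Aset col x (Fseq col x k) n) n})]"

lemma pred_Aset[measurable]: "Measurable.pred borel (\<lambda>x. Aset col x L n)"
  unfolding Aset_def by measurable

lemma Fseq_meas[measurable]: "(\<lambda>x. Fseq col x k) \<in> measurable borel (count_space UNIV)"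
proof (induction k)
  case 0 then show ?case by simp
next
  case (Suc k)
  note [measurable] = Suc
  show ?case unfolding Fseq.simps by measurable
qed

definition ai where "ai col x k = fst (last (Fseq col x (Suc k)))"
definition bi where "bi col x k = snd (last (Fseq col x (Suc k)))"

lemma ai_eq: "ai col x k = (LEAST n. Aset col x (Fseq col x k) n)"
  unfolding ai_def by simp
lemma bi_eq: "bi col x k = infinite {n. Aset col x (Fseq col x k) n \<and> ai col x k < n \<and> col (ai col x k) n}"
  unfolding bi_def ai_def by simp

lemma Fseq_Suc: "Fseq col x (Suc k) = Fseq col x k @ [(ai col x k, bi col x k)]"
  unfolding ai_def bi_def by simp

lemma Fseq_map: "Fseq col x k = map (\<lambda>j. (ai col x j, bi col x j)) [0..<k]"
  by (induction k) (simp_all only: Fseq_Suc, auto)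

lemma Aset_iff: "Aset col x (Fseq col x k) n \<longleftrightarrow> x n \<and> (\<forall>j<k. ai col x j < n \<and> col (ai col x j) n = bi col x j)"
  unfolding Aset_def Fseq_map by auto

lemma Aset_Suc: "Aset col x (Fseq col x (Suc k)) n \<longleftrightarrow>
   Aset col x (Fseq col x k) n \<and> ai col x k < n \<and> col (ai col x k) n = bi col x k"
  unfolding Aset_iff by (auto simp: less_Suc_eq)

lemma Aset_infinite:
  assumes "infinite (Collect x)"
  shows "infinite {n. Aset col x (Fseq col x k) n}"
proof (induction k)
  case 0 then show ?case using assms by (simp add: Aset_def)
next
  case (Suc k)
  let ?A = "{n. Aset col x (Fseq col x k) n}"
  let ?a = "ai col x k"
  let ?T = "{n. Aset col x (Fseq col x k) n \<and> ?a < n \<and> col ?a n}"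
  have eq: "{n. Aset col x (Fseq col x (Suc k)) n} = {n\<in>?A. ?a < n \<and> col ?a n = bi col x k}"
    unfolding Aset_Suc by auto
  show ?case
  proof (cases "bi col x k")
    case True
    have "infinite ?T" using True unfolding bi_eq .
    moreover have "?T = {n\<in>?A. ?a < n \<and> col ?a n = bi col x k}" using True by auto
    ultimately show ?thesis using eq by simp
  next
    case False
    have fT: "finite ?T" using False unfolding bi_eq by simp
    have s: "?A - {..?a} - ?T \<subseteq> {n\<in>?A. ?a < n \<and> col ?a n = bi col x k}" using False by auto
    have "infinite (?A - {..?a} - ?T)" using Suc fT by simp
    then have "infinite {n\<in>?A. ?a < n \<and> col ?a n = bi col x k}" by (rule infinite_super[OF s])
    then show ?thesis unfolding eq .
  qed
qed

lemma ai_props: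
  assumes "infinite (Collect x)"
  shows "x (ai col x k) \<and> (\<forall>j<k. ai col x j < ai col x k \<and> col (ai col x j) (ai col x k) = bi col x j)"
proof -
  obtain n where "Aset col x (Fseq col x k) n" using Aset_infinite[OF assms, of col k]
    by (metis Collect_empty_eq finite.emptyI)
  then have "Aset col x (Fseq col x k) (ai col x k)" unfolding ai_eq by (rule LeastI)
  then show ?thesis unfolding Aset_iff by blast
qed

definition Ssel where
  "Ssel col x = (\<lambda>n. x n \<and> (\<exists>k. ai col x k = n \<and> bi col x k = (\<forall>N. \<exists>k>N. bi col x k)))"

lemma Ssel_meas: "Ssel col \<in> borel_measurable borel"
proof (rule measurable_coordinatewise_then_product)
  fix n
  have "Measurable.pred borel (\<lambda>x. Ssel col x n)"
    unfolding Ssel_def ai_def bi_def by measurable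
  then show "(\<lambda>x. Ssel col x n) \<in> borel_measurable borel"
    using measurable_cong_sets[OF refl sets_borel_eq_count_space] by blast
qed

lemma Ssel_infinite:
  assumes "infinite (Collect x)"
  shows "infinite (Collect (Ssel col x))"
proof -
  let ?b = "\<forall>N. \<exists>k>N. bi col x k"
  have sm: "strict_mono (ai col x)" using ai_props[OF assms] by (simp add: strict_mono_def)
  have eq: "Collect (Ssel col x) = ai col x ` {k. bi col x k = ?b}"
    using ai_props[OF assms] unfolding Ssel_def by auto
  have "infinite {k. bi col x k = ?b}"
  proof (cases ?b)
    case True
    then show ?thesis by (simp add: infinite_nat_iff_unbounded)
  next
    case False
    then obtain N where "\<forall>k>N. \<not> bi col x k" by auto
    then have "{N<..} \<subseteq> {k. bi col x k = ?b}" using False by auto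
    then show ?thesis using infinite_Ioi finite_subset by blast
  qed
  moreover have "inj_on (ai col x) {k. bi col x k = ?b}"
    by (rule inj_on_subset[OF strict_mono_imp_inj_on[OF sm] subset_UNIV])
  ultimately show ?thesis unfolding eq using finite_imageD by blast
qed

lemma Ssel_hom:
  assumes "infinite (Collect x)" and sym: "\<And>m n. col m n = col n m"
  shows "\<exists>b. \<forall>m\<in>Collect (Ssel col x). \<forall>n\<in>Collect (Ssel col x). m \<noteq> n \<longrightarrow> col m n = b"
proof (intro exI ballI impI)
  let ?b = "\<forall>N. \<exists>k>N. bi col x k"
  fix m n assume m: "m \<in> Collect (Ssel col x)" and n: "n \<in> Collect (Ssel col x)" and ne: "m \<noteq> n"
  obtain j where j: "ai col x j = m" "bi col x j = ?b" using m unfolding Ssel_def by auto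
  obtain i where i: "ai col x i = n" "bi col x i = ?b" using n unfolding Ssel_def by auto
  have "j \<noteq> i" using ne i j by auto
  then show "col m n = ?b"
  proof (cases "j < i")
    case True then show ?thesis using ai_props[OF assms(1), of col i] i j by auto
  next
    case False then have "i < j" using \<open>j \<noteq> i\<close> by simp
    then show ?thesis using ai_props[OF assms(1), of col j] i j sym by auto
  qed
qed


theorem mainTheorem18:
  fixes T :: "'a topology"
  assumes "topspace T \<noteq> {}"
    and "countable (topspace T)"
    and "t1_space T" and "regular_space T"
    and "\<forall>x\<in>topspace T. \<not> openin T {x}"
  shows "(\<exists>c :: 'a set \<Rightarrow> bool. \<forall>h. h \<subseteq> topspace T \<and> infinite h \<and> homogeneous c h
            \<longrightarrow> nowhere_dense_in T h)
       \<and> (\<forall>e :: 'a \<Rightarrow> nat. bij_betw e (topspace T) UNIV \<longrightarrow>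
            (\<exists>S. borel_selector {e ` A | A. nowhere_dense_in T A} S))"
proof -
  have P1: "\<exists>c :: 'a set \<Rightarrow> bool. \<forall>h. h \<subseteq> topspace T \<and> infinite h \<and> homogeneous c h
            \<longrightarrow> nowhere_dense_in T h" by (rule part1[OF assms(2,3,4,5)])
  then obtain c :: "'a set \<Rightarrow> bool" where c0: "\<forall>h. h \<subseteq> topspace T \<and> infinite h \<and> homogeneous c h
            \<longrightarrow> nowhere_dense_in T h" by (elim exE)
  have c: "nowhere_dense_in T h" if "h \<subseteq> topspace T" "infinite h" "homogeneous c h" for h
    using c0 that by simp
  have P2: "\<exists>S. borel_selector {e ` A | A. nowhere_dense_in T A} S"
    if e: "bij_betw e (topspace T) UNIV" for e :: "'a \<Rightarrow> nat"
  proof -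
    let ?X = "topspace T"
    let ?i = "inv_into ?X e"
    define col where "col m n = c {?i m, ?i n}" for m n
    have sym: "col m n = col n m" for m n unfolding col_def by (simp add: insert_commute)
    have surj: "e ` ?X = UNIV" using e by (simp add: bij_betw_def)
    have ei: "e (?i n) = n" for n using surj by (simp add: f_inv_into_f)
    have iX: "?i n \<in> ?X" for n using surj by (intro inv_into_into) simp
    have sub: "Collect (Ssel col x) \<subseteq> Collect x" for x :: "nat \<Rightarrow> bool" unfolding Ssel_def by blast
    have inC: "Collect (Ssel col x) \<in> {e ` A | A. nowhere_dense_in T A}" for x :: "nat \<Rightarrow> bool"
    proof -
      let ?h = "?i ` Collect (Ssel col x)"
      have img: "e ` ?h = Collect (Ssel col x)" using ei by (simp add: image_image)
      have hX: "?h \<subseteq> ?X" using iX by blast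
      have nwd: "nowhere_dense_in T ?h"
      proof (cases "finite ?h")
        case True then show ?thesis by (rule finite_nwd[OF assms(3,5) hX])
      next
        case False
        have infS: "infinite (Collect (Ssel col x))"
        proof
          assume "finite (Collect (Ssel col x))"
          then have "finite ?h" by (rule finite_imageI)
          then show False using False by simp
        qed
        have infx: "infinite (Collect x)"
        proof
          assume "finite (Collect x)"
          then have "finite (Collect (Ssel col x))" by (rule finite_subset[OF sub])
          then show False using infS by simp
        qed
        obtain b where b: "\<forall>m\<in>Collect (Ssel col x). \<forall>n\<in>Collect (Ssel col x). m \<noteq> n \<longrightarrow> col m n = b"
          using Ssel_hom[where col=col and x="x::nat\<Rightarrow>bool", OF infx sym] by (elim exE)
        have "homogeneous c ?h"
          unfolding homogeneous_def
        proof (intro exI[of _ b] ballI impI)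
          fix p q assume p: "p \<in> ?h" and q: "q \<in> ?h" and ne: "p \<noteq> q"
          obtain m where m: "m \<in> Collect (Ssel col x)" "p = ?i m" using p by blast
          obtain n where n: "n \<in> Collect (Ssel col x)" "q = ?i n" using q by blast
          have "m \<noteq> n" using m n ne by blast
          then have "col m n = b" using b m(1) n(1) by blast
          then show "c {p, q} = b" unfolding col_def using m(2) n(2) by simp
        qed
        then show ?thesis by (rule c[OF hX False])
      qed
      show ?thesis by (rule CollectI, rule exI[of _ ?h], rule conjI[OF img[symmetric] nwd])
    qed
    have "borel_selector {e ` A | A. nowhere_dense_in T A} (Ssel col)"
      unfolding borel_selector_def
    proof (intro conjI allI impI)
      show "Ssel col \<in> borel_measurable borel" by (rule Ssel_meas)
    next
      fix x :: "nat \<Rightarrow> bool" show "Collect (Ssel col x) \<subseteq> Collect x" by (rule sub)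
    next
      fix x :: "nat \<Rightarrow> bool" show "Collect (Ssel col x) \<in> {e ` A | A. nowhere_dense_in T A}" by (rule inC)
    next
      fix x :: "nat \<Rightarrow> bool" assume "infinite (Collect x)"
      then show "infinite (Collect (Ssel col x))" by (rule Ssel_infinite)
    qed
    then show ?thesis by (rule exI[of _ "Ssel col"])
  qed
  show ?thesis
  proof (intro conjI allI impI)
    show "\<exists>c :: 'a set \<Rightarrow> bool. \<forall>h. h \<subseteq> topspace T \<and> infinite h \<and> homogeneous c h
            \<longrightarrow> nowhere_dense_in T h" by (rule P1)
  next
    fix e :: "'a \<Rightarrow> nat" assume "bij_betw e (topspace T) UNIV"
    then show "\<exists>S. borel_selector {e ` A | A. nowhere_dense_in T A} S" by (rule P2)
  qed
qed

end
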